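(* Consider the SBCM described in the context with parameters $\gamma>0$ and $\delta\ge 0$, and let $\mathbf{x}$ be a steady state. Suppose there exists a persuadable node $i\in\mathcal{P}$ such that $$(1-w_{ij})(x_j-x_i)^2>\frac{1}{2\gamma}\quad\text{for all } j\sim i,$$ where $w_{ij}=w(x_i,x_j)$. Then the matrix $\mathbf{J}_{\mathcal{P}}$ (and hence the Jacobian matrix $\mathbf{J}$ of $\mathbf{F}$) evaluated at $\mathbf{x}$ has at least one strictly positive eigenvalue.
   Context: Let $\mathcal{G}$ be a finite undirected unweighted graph without self-loops, with node set $\mathcal{N}$; write $i\sim j$ if nodes $i,j$ are adjacent. The node set is partitioned into a set $\mathcal{Z}$ of zealots and a set $\mathcal{P}=\mathcal{N}\setminus\mathcal{Z}$ of persuadable nodes; every persuadable node is assumed to have at least one neighbor. Fix $\gamma,\delta\ge 0$. The influence function is $w(x_i,x_j)=\frac{1}{1+e^{\gamma(x_i-x_j)^2-\gamma\delta}}$ if $i\sim j$ and $w(x_i,x_j)=0$ otherwise. For an opinion vector $\mathbf{x}\in\mathbb{R}^{\mathcal{N}}$, the sigmoidal bounded-confidence model (SBCM) is $\frac{dx_i}{dt}=f_i(\mathbf{x})$, where $f_i(\mathbf{x})=\frac{\sum_j w(x_i,x_j)(x_j-x_i)}{\sum_j w(x_i,x_j)}$ for $i\in\mathcal{P}$ and $f_i(\mathbf{x})=0$ for $i\in\mathcal{Z}$; $\mathbf{F}=(f_i)_i$. A steady state is an $\mathbf{x}$ with $\mathbf{F}(\mathbf{x})=\mathbf{0}$. $\mathbf{J}$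 denotes the Jacobian matrix of $\mathbf{F}$ and $\mathbf{J}_{\mathcal{P}}$ its submatrix of entries $\partial f_i/\partial x_j$ with $i,j\in\mathcal{P}$. *)

theory Defs
  imports "HOL-Analysis.Analysis"
begin

definition sbcm_w :: "('n \<Rightarrow> 'n \<Rightarrow> bool) \<Rightarrow> real \<Rightarrow> real \<Rightarrow> real \<Rightarrow> real \<Rightarrow> 'n \<Rightarrow> 'n \<Rightarrow> real" where
  "sbcm_w E \<gamma> \<delta> xi xj i j =
     (if E i j then 1 / (1 + exp (\<gamma> * (xi - xj)^2 - \<gamma> * \<delta>)) else 0)"

definition sbcm_f :: "('n::finite \<Rightarrow> 'n \<Rightarrow> bool) \<Rightarrow> 'n set \<Rightarrow> real \<Rightarrow> real \<Rightarrow> 'n \<Rightarrow> ('n \<Rightarrow> real) \<Rightarrow> real" where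
  "sbcm_f E Z \<gamma> \<delta> i x =
     (if i \<in> Z then 0
      else (\<Sum>j\<in>UNIV. sbcm_w E \<gamma> \<delta> (x i) (x j) i j * (x j - x i))
           / (\<Sum>j\<in>UNIV. sbcm_w E \<gamma> \<delta> (x i) (x j) i j))"

definition partial_deriv :: "(('n \<Rightarrow> real) \<Rightarrow> real) \<Rightarrow> 'n \<Rightarrow> ('n \<Rightarrow> real) \<Rightarrow> real" where
  "partial_deriv g j x = deriv (\<lambda>t. g (x(j := t))) (x j)"

definition sbcm_jacobian :: "('n::finite \<Rightarrow> 'n \<Rightarrow> bool) \<Rightarrow> 'n set \<Rightarrow> real \<Rightarrow> real \<Rightarrow> ('n \<Rightarrow> real) \<Rightarrow> 'n \<Rightarrow> 'n \<Rightarrow> real" where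
  "sbcm_jacobian E Z \<gamma> \<delta> x i j = partial_deriv (sbcm_f E Z \<gamma> \<delta> i) j x"

definition is_eigenvalue_sub :: "('n::finite \<Rightarrow> 'n \<Rightarrow> real) \<Rightarrow> 'n set \<Rightarrow> real \<Rightarrow> bool" where
  "is_eigenvalue_sub M S lam \<longleftrightarrow>
     (\<exists>v :: 'n \<Rightarrow> real. (\<forall>k. k \<notin> S \<longrightarrow> v k = 0) \<and> (\<exists>k\<in>S. v k \<noteq> 0) \<and>
        (\<forall>i\<in>S. (\<Sum>j\<in>S. M i j * v j) = lam * v i))"

end

theory Submission
  imports Defs
begin

lemma quad_zero:
  fixes b c :: real
  assumes "\<And>t. 2*t*b + t^2*c \<le> 0"
  shows "b = 0"
proof (rule ccontr)
  assume nz: "b \<noteq> 0"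
  define a where "a = \<bar>c\<bar> + 1"
  define t where "t = b / a"
  have cp: "a > 0" unfolding a_def by simp
  have h1: "2*t*b + t^2*c \<ge> 2*t*b - t^2*\<bar>c\<bar>"
    using mult_left_mono[of "-\<bar>c\<bar>" c "t^2"] by simp
  have h2: "2*t*b - t^2*\<bar>c\<bar> = b^2 * (2*a - \<bar>c\<bar>) / a^2"
    unfolding t_def using cp by (simp add: field_simps power2_eq_square)
  have h3: "b^2 * (2*a - \<bar>c\<bar>) / a^2 > 0" using nz cp unfolding a_def by (intro divide_pos_pos mult_pos_pos) auto
  show False using order_trans[OF h1 assms[of t]] h2 h3 by simp
qed

lemma delta_sum:
  fixes f :: "'n::finite \<Rightarrow> real"
  shows "(\<Sum>l\<in>UNIV. f l * (if l = k then 1 else 0)) = f k"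
proof -
  have "(\<Sum>l\<in>UNIV. f l * (if l = k then 1 else 0)) = (\<Sum>l\<in>UNIV. if l = k then f l else 0)"
    by (intro sum.cong) auto
  then show ?thesis by simp
qed

lemma sym_eig:
  fixes S :: "'n::finite \<Rightarrow> 'n \<Rightarrow> real" and P :: "'n set"
  assumes symS: "\<And>a b. S a b = S b a" and iP: "i \<in> P" and pos: "S i i > 0"
  shows "\<exists>\<mu>>0. \<exists>u. (\<forall>k. k \<notin> P \<longrightarrow> u k = 0) \<and> (\<exists>k\<in>P. u k \<noteq> 0) \<and>
           (\<forall>k\<in>P. (\<Sum>l\<in>UNIV. S k l * u l) = \<mu> * u k)"
proof -
  define q where "q u = (\<Sum>a\<in>UNIV. \<Sum>b\<in>UNIV. S a b * u a * u b)" for u :: "'n \<Rightarrow> real"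
  define K where "K = {v::real^'n. (\<Sum>k\<in>UNIV. (v$k)^2) = 1} \<inter> (\<Inter>k\<in>-P. {v. v$k = 0})"
  have nrm: "norm v = sqrt (\<Sum>k\<in>UNIV. (v$k)^2)" for v :: "real^'n"
    by (simp add: norm_vec_def L2_set_def)
  have "closed K" unfolding K_def
    by (intro closed_Int closed_INT ballI closed_Collect_eq continuous_intros)
  moreover have "bounded K" unfolding bounded_iff K_def using nrm by auto
  ultimately have cK: "compact K" using compact_eq_bounded_closed by blast
  have "(\<Sum>k\<in>UNIV. (axis i 1 $ k)^2) = (\<Sum>k\<in>UNIV. if k = i then 1 else (0::real))"
    by (intro sum.cong) (auto simp: axis_def)
  then have ax: "axis i 1 \<in> K" using iP unfolding K_def by (auto simp: axis_def)
  have "continuous_on K (\<lambda>v. q (\<lambda>k. v$k))" unfolding q_def by (intro continuous_intros)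
  then obtain v0 where v0: "v0 \<in> K" and mx: "\<And>y. y \<in> K \<Longrightarrow> q (\<lambda>k. y$k) \<le> q (\<lambda>k. v0$k)"
    using continuous_attains_sup[OF cK] ax by blast
  define u where "u = (\<lambda>k. v0$k)"
  define \<mu> where "\<mu> = q u"
  have u1: "(\<Sum>k\<in>UNIV. (u k)^2) = 1" and u0: "\<And>k. k \<notin> P \<Longrightarrow> u k = 0"
    using v0 unfolding K_def u_def by auto
  have "q (\<lambda>k. axis i 1 $ k) = (\<Sum>a\<in>UNIV. \<Sum>b\<in>UNIV. if b = i then (if a = i then S a b else 0) else 0)"
    unfolding q_def by (intro sum.cong refl) (auto simp: axis_def)
  also have "\<dots> = S i i" by simp
  finally have "q (\<lambda>k. axis i 1 $ k) = S i i" .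
  then have mupos: "\<mu> > 0" using mx[OF ax] pos unfolding \<mu>_def u_def by simp
  have bound: "q w \<le> \<mu> * (\<Sum>k\<in>UNIV. (w k)^2)" if w0: "\<And>k. k \<notin> P \<Longrightarrow> w k = 0" for w
  proof (cases "(\<Sum>k\<in>UNIV. (w k)^2) = 0")
    case True
    then have "\<And>k. w k = 0" by (simp add: sum_nonneg_eq_0_iff)
    then show ?thesis unfolding q_def by simp
  next
    case False
    define n where "n = (\<Sum>k\<in>UNIV. (w k)^2)"
    have np: "n > 0" using False sum_nonneg[of UNIV "\<lambda>k. (w k)^2"] unfolding n_def by fastforce
    define c where "c = sqrt n"
    have cp: "c > 0" and cc: "c^2 = n" using np unfolding c_def by auto
    define y where "y = (\<chi> k. w k / c)"
    have "(\<Sum>k\<in>UNIV. (y$k)^2) = n / c^2"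
      unfolding y_def n_def by (simp add: power_divide sum_divide_distrib)
    then have "y \<in> K" using cc np w0 unfolding K_def y_def by auto
    then have "q (\<lambda>k. y$k) \<le> \<mu>" using mx unfolding \<mu>_def u_def by blast
    moreover have "q (\<lambda>k. y$k) = q w / c^2"
      unfolding q_def y_def by (simp add: sum_divide_distrib power2_eq_square)
    ultimately show ?thesis using cc np unfolding n_def[symmetric] by (simp add: field_simps)
  qed
  have eig: "(\<Sum>l\<in>UNIV. S k l * u l) = \<mu> * u k" if kP: "k \<in> P" for k
  proof -
    define h where "h = (\<lambda>l. if l = k then 1 else (0::real))"
    define b where "b = (\<Sum>l\<in>UNIV. S k l * u l)"
    have "2*t*(b - \<mu> * u k) + t^2*(S k k - \<mu>) \<le> 0" for t
    proof -
      define w where "w = (\<lambda>l. u l + t * h l)"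
      have "q w \<le> \<mu> * (\<Sum>l\<in>UNIV. (w l)^2)"
        by (rule bound) (auto simp: w_def h_def u0 kP)
      moreover have "(\<Sum>l\<in>UNIV. (w l)^2) = 1 + 2*t*u k + t^2"
      proof -
        have "(\<Sum>l\<in>UNIV. (w l)^2) = (\<Sum>l\<in>UNIV. (u l)^2 + 2*t*(u l * h l) + t^2 * h l)"
          unfolding w_def h_def by (intro sum.cong) (auto simp: power2_eq_square algebra_simps)
        also have "\<dots> = 1 + 2*t*u k + t^2"
          using u1 by (simp add: sum.distrib sum_distrib_left[symmetric] h_def delta_sum)
        finally show ?thesis .
      qed
      moreover have "q w = \<mu> + 2*t*b + t^2 * S k k"
      proof -
        have "q w = (\<Sum>a\<in>UNIV. \<Sum>bb\<in>UNIV. S a bb * u a * u bb + t * (S a bb * u a * h bb)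
                    + t * (S a bb * h a * u bb) + t^2 * (S a bb * h a * h bb))"
          unfolding q_def w_def by (intro sum.cong refl) (simp add: algebra_simps power2_eq_square)
        also have "\<dots> = \<mu> + t * (\<Sum>a\<in>UNIV. \<Sum>bb\<in>UNIV. S a bb * u a * h bb)
              + t * (\<Sum>a\<in>UNIV. \<Sum>bb\<in>UNIV. S a bb * h a * u bb)
              + t^2 * (\<Sum>a\<in>UNIV. \<Sum>bb\<in>UNIV. S a bb * h a * h bb)"
          unfolding \<mu>_def q_def by (simp only: sum.distrib sum_distrib_left)
        also have "(\<Sum>a\<in>UNIV. \<Sum>bb\<in>UNIV. S a bb * u a * h bb) = (\<Sum>a\<in>UNIV. S a k * u a)"
          unfolding h_def by (simp only: delta_sum)
        also have "(\<Sum>a\<in>UNIV. \<Sum>bb\<in>UNIV. S a bb * h a * u bb) = (\<Sum>a\<in>UNIV. (\<Sum>bb\<in>UNIV. S a bb * u bb) * h a)"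
          by (simp add: sum_distrib_right sum_distrib_left mult_ac)
        also have "\<dots> = (\<Sum>bb\<in>UNIV. S k bb * u bb)"
          unfolding h_def by (simp only: delta_sum)
        also have "(\<Sum>a\<in>UNIV. \<Sum>bb\<in>UNIV. S a bb * h a * h bb) = (\<Sum>a\<in>UNIV. S a k * h a)"
          unfolding h_def by (simp only: delta_sum)
        also have "\<dots> = S k k"
          unfolding h_def by (simp only: delta_sum)
        also have "(\<Sum>a\<in>UNIV. S a k * u a) = b" unfolding b_def using symS by metis
        finally show ?thesis unfolding b_def by simp
      qed
      ultimately show ?thesis using mupos by (simp add: algebra_simps)
    qed
    then have "b - \<mu> * u k = 0" by (rule quad_zero)
    then show ?thesis unfolding b_def by simp
  qed
  have "\<exists>k\<in>P. u k \<noteq> 0"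
  proof (rule ccontr)
    assume "\<not> ?thesis"
    then have "\<And>k. u k = 0" using u0 by blast
    then show False using u1 by simp
  qed
  then show ?thesis using mupos u0 eig by blast
qed

lemma alg:
  fixes e g a b a' b' :: real
  assumes ep: "e > 0"
  shows "(0*(1+e) - 1*(e*(g*(2*(a'-b')*(a-b)))))/((1+e)*(1+e)) * (b-a) + (b'-a')*(1/(1+e))
     = (1/(1+e))*(b'-a')*(1 - 2*g*(1 - 1/(1+e))*(b-a)^2)"
proof -
  have ne: "1 + e \<noteq> 0" using ep by linarith
  have h: "1 - 1/(1+e) = e/(1+e)" using ne by (simp add: field_simps)
  show ?thesis unfolding h using ne
    by (simp add: divide_simps) (simp add: algebra_simps power2_eq_square)
qed

lemma p_deriv:
  fixes A B :: "real \<Rightarrow> real"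
  assumes dA: "(A has_real_derivative A') (at t)" and dB: "(B has_real_derivative B') (at t)"
  shows "((\<lambda>s. 1/(1+exp(\<gamma>*(A s - B s)^2 - \<gamma>*\<delta>))) has_real_derivative
     (0 * (1 + exp(\<gamma>*(A t - B t)^2 - \<gamma>*\<delta>)) - 1 * (exp(\<gamma>*(A t - B t)^2 - \<gamma>*\<delta>) * (\<gamma>*(2*(A'-B')*(A t - B t)))))
      / ((1 + exp(\<gamma>*(A t - B t)^2 - \<gamma>*\<delta>)) * (1 + exp(\<gamma>*(A t - B t)^2 - \<gamma>*\<delta>)))) (at t)"
proof -
  have d1: "((\<lambda>s. A s - B s) has_real_derivative A' - B') (at t)" using DERIV_diff[OF dA dB] .
  have d2: "((\<lambda>s. (A s - B s)^2) has_real_derivative 2*(A'-B')*(A t - B t)) (at t)"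
    using DERIV_power[OF d1, of 2] by (simp add: algebra_simps)
  have d3: "((\<lambda>s. \<gamma>*(A s - B s)^2 - \<gamma>*\<delta>) has_real_derivative \<gamma>*(2*(A'-B')*(A t - B t))) (at t)"
    using DERIV_diff[OF DERIV_cmult[OF d2] DERIV_const] by simp
  have d4: "((\<lambda>s. exp(\<gamma>*(A s - B s)^2 - \<gamma>*\<delta>)) has_real_derivative
      exp(\<gamma>*(A t - B t)^2 - \<gamma>*\<delta>) * (\<gamma>*(2*(A'-B')*(A t - B t)))) (at t)"
    using DERIV_fun_exp[OF d3] .
  have d5: "((\<lambda>s. 1 + exp(\<gamma>*(A s - B s)^2 - \<gamma>*\<delta>)) has_real_derivative
      exp(\<gamma>*(A t - B t)^2 - \<gamma>*\<delta>) * (\<gamma>*(2*(A'-B')*(A t - B t)))) (at t)"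
    using DERIV_add[OF DERIV_const d4] by simp
  have ne: "1 + exp(\<gamma>*(A t - B t)^2 - \<gamma>*\<delta>) \<noteq> 0"
    using exp_gt_zero[of "\<gamma>*(A t - B t)^2 - \<gamma>*\<delta>"] by linarith
  show ?thesis using DERIV_divide[OF DERIV_const d5 ne] .
qed

lemma term_deriv:
  fixes A B :: "real \<Rightarrow> real"
  assumes dA: "(A has_real_derivative A') (at t)" and dB: "(B has_real_derivative B') (at t)"
  shows "((\<lambda>s. (1/(1+exp(\<gamma>*(A s - B s)^2 - \<gamma>*\<delta>))) * (B s - A s)) has_real_derivative
     (1/(1+exp(\<gamma>*(A t - B t)^2 - \<gamma>*\<delta>))) * (B' - A') *
       (1 - 2*\<gamma>*(1 - 1/(1+exp(\<gamma>*(A t - B t)^2 - \<gamma>*\<delta>)))*(B t - A t)^2)) (at t)"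
proof -
  define e where "e = exp(\<gamma>*(A t - B t)^2 - \<gamma>*\<delta>)"
  have ep: "e > 0" unfolding e_def by simp
  have d6: "((\<lambda>s. 1/(1+exp(\<gamma>*(A s - B s)^2 - \<gamma>*\<delta>))) has_real_derivative
     (0 * (1 + e) - 1 * (e * (\<gamma>*(2*(A'-B')*(A t - B t))))) / ((1 + e) * (1 + e))) (at t)"
    using p_deriv[OF dA dB, of \<gamma> \<delta>] unfolding e_def .
  have d7: "((\<lambda>s. B s - A s) has_real_derivative B' - A') (at t)" using DERIV_diff[OF dB dA] .
  have "((\<lambda>s. (1/(1+exp(\<gamma>*(A s - B s)^2 - \<gamma>*\<delta>))) * (B s - A s)) has_real_derivative
     (0 * (1 + e) - 1 * (e * (\<gamma>*(2*(A'-B')*(A t - B t))))) / ((1 + e) * (1 + e)) * (B t - A t)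
       + (B' - A') * (1/(1+e))) (at t)"
    using DERIV_mult[OF d6 d7] unfolding e_def .
  moreover have "(0 * (1 + e) - 1 * (e * (\<gamma>*(2*(A'-B')*(A t - B t))))) / ((1 + e) * (1 + e)) * (B t - A t)
       + (B' - A') * (1/(1+e)) = (1/(1+e)) * (B' - A') * (1 - 2*\<gamma>*(1 - 1/(1+e))*(B t - A t)^2)"
    by (rule alg[OF ep])
  ultimately show ?thesis unfolding e_def by simp
qed

lemma y_deriv:
  fixes x :: "'n \<Rightarrow> real"
  shows "((\<lambda>t. (x(j:=t)) m) has_real_derivative (if m = j then 1 else 0)) (at s)"
  by (cases "m = j") auto

lemma w_term_deriv:
  fixes x :: "'n \<Rightarrow> real"
  shows "((\<lambda>t. sbcm_w E \<gamma> \<delta> ((x(j:=t)) k) ((x(j:=t)) l) k l * ((x(j:=t)) l - (x(j:=t)) k))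
     has_real_derivative
      (sbcm_w E \<gamma> \<delta> (x k) (x l) k l * (1 - 2*\<gamma>*(1 - sbcm_w E \<gamma> \<delta> (x k) (x l) k l)*(x l - x k)^2))
       * ((if l = j then 1 else 0) - (if k = j then 1 else 0))) (at (x j))"
proof (cases "E k l")
  case True
  have "((\<lambda>t. (1/(1+exp(\<gamma>*((x(j:=t)) k - (x(j:=t)) l)^2 - \<gamma>*\<delta>))) * ((x(j:=t)) l - (x(j:=t)) k))
     has_real_derivative
      (1/(1+exp(\<gamma>*((x(j:=x j)) k - (x(j:=x j)) l)^2 - \<gamma>*\<delta>))) * ((if l = j then 1 else 0) - (if k = j then 1 else 0)) *
       (1 - 2*\<gamma>*(1 - 1/(1+exp(\<gamma>*((x(j:=x j)) k - (x(j:=x j)) l)^2 - \<gamma>*\<delta>)))*((x(j:=x j)) l - (x(j:=x j)) k)^2)) (at (x j))"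
    by (rule term_deriv[OF y_deriv y_deriv])
  then show ?thesis using True by (simp add: sbcm_w_def mult_ac)
next
  case False
  then show ?thesis by (simp add: sbcm_w_def)
qed

lemma w_deriv_ex:
  fixes x :: "'n \<Rightarrow> real"
  shows "\<exists>D. ((\<lambda>t. sbcm_w E \<gamma> \<delta> ((x(j:=t)) k) ((x(j:=t)) l) k l) has_real_derivative D) (at (x j))"
proof (cases "E k l")
  case True
  have "\<exists>D. ((\<lambda>t. 1/(1+exp(\<gamma>*((x(j:=t)) k - (x(j:=t)) l)^2 - \<gamma>*\<delta>))) has_real_derivative D) (at (x j))"
    by (rule exI, rule p_deriv[OF y_deriv y_deriv])
  then show ?thesis using True by (simp add: sbcm_w_def)
next
  case False
  then show ?thesis by (simp add: sbcm_w_def) (rule exI, rule DERIV_const)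
qed


lemma jac_formula:
  fixes x :: "'n::finite \<Rightarrow> real"
  assumes kZ: "k \<notin> Z"
    and Wne: "(\<Sum>l\<in>UNIV. sbcm_w E \<gamma> \<delta> (x k) (x l) k l) \<noteq> 0"
    and N0: "(\<Sum>l\<in>UNIV. sbcm_w E \<gamma> \<delta> (x k) (x l) k l * (x l - x k)) = 0"
  shows "sbcm_jacobian E Z \<gamma> \<delta> x k j =
    (\<Sum>l\<in>UNIV. sbcm_w E \<gamma> \<delta> (x k) (x l) k l * (1 - 2*\<gamma>*(1 - sbcm_w E \<gamma> \<delta> (x k) (x l) k l)*(x l - x k)^2)
       * ((if l = j then 1 else 0) - (if k = j then 1 else 0))) / (\<Sum>l\<in>UNIV. sbcm_w E \<gamma> \<delta> (x k) (x l) k l)"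
proof -
  define N where "N t = (\<Sum>l\<in>UNIV. sbcm_w E \<gamma> \<delta> ((x(j:=t)) k) ((x(j:=t)) l) k l * ((x(j:=t)) l - (x(j:=t)) k))" for t
  define D where "D t = (\<Sum>l\<in>UNIV. sbcm_w E \<gamma> \<delta> ((x(j:=t)) k) ((x(j:=t)) l) k l)" for t
  define N' where "N' = (\<Sum>l\<in>UNIV. sbcm_w E \<gamma> \<delta> (x k) (x l) k l * (1 - 2*\<gamma>*(1 - sbcm_w E \<gamma> \<delta> (x k) (x l) k l)*(x l - x k)^2)
       * ((if l = j then 1 else 0) - (if k = j then 1 else 0)))"
  have f: "(\<lambda>t. sbcm_f E Z \<gamma> \<delta> k (x(j:=t))) = (\<lambda>t. N t / D t)"
    unfolding N_def D_def sbcm_f_def using kZ by simp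
  have dN: "(N has_real_derivative N') (at (x j))"
    unfolding N_def N'_def by (rule DERIV_sum) (rule w_term_deriv)
  have "\<forall>l. \<exists>D'. ((\<lambda>t. sbcm_w E \<gamma> \<delta> ((x(j:=t)) k) ((x(j:=t)) l) k l) has_real_derivative D') (at (x j))"
    by (intro allI w_deriv_ex)
  then obtain Dl where Dl: "\<And>l. ((\<lambda>t. sbcm_w E \<gamma> \<delta> ((x(j:=t)) k) ((x(j:=t)) l) k l) has_real_derivative Dl l) (at (x j))"
    by metis
  have dD: "(D has_real_derivative (\<Sum>l\<in>UNIV. Dl l)) (at (x j))"
    unfolding D_def by (rule DERIV_sum) (rule Dl)
  have Dx: "D (x j) = (\<Sum>l\<in>UNIV. sbcm_w E \<gamma> \<delta> (x k) (x l) k l)" unfolding D_def by simp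
  have Nx: "N (x j) = 0" unfolding N_def using N0 by simp
  have "((\<lambda>t. N t / D t) has_real_derivative (N' * D (x j) - N (x j) * (\<Sum>l\<in>UNIV. Dl l)) / (D (x j) * D (x j))) (at (x j))"
    by (rule DERIV_divide[OF dN dD]) (use Dx Wne in simp)
  then have "deriv (\<lambda>t. N t / D t) (x j) = N' / D (x j)"
    using Nx Dx Wne by (simp add: DERIV_imp_deriv)
  then show ?thesis unfolding sbcm_jacobian_def partial_deriv_def f N'_def Dx .
qed

lemma jac_zealot:
  assumes "k \<in> Z"
  shows "sbcm_jacobian E Z \<gamma> \<delta> x k j = 0"
proof -
  have "(\<lambda>t. sbcm_f E Z \<gamma> \<delta> k (x(j:=t))) = (\<lambda>t. 0)" using assms by (simp add: sbcm_f_def)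
  then show ?thesis unfolding sbcm_jacobian_def partial_deriv_def by (simp add: DERIV_imp_deriv)
qed

theorem proposition1:
  fixes E :: "'n::finite \<Rightarrow> 'n \<Rightarrow> bool"
    and Z :: "'n set"
    and \<gamma> \<delta> :: real
    and x :: "'n \<Rightarrow> real"
  assumes sym: "\<And>i j. E i j \<Longrightarrow> E j i"
    and irrefl: "\<And>i. \<not> E i i"
    and nbr: "\<And>i. i \<notin> Z \<Longrightarrow> \<exists>j. E i j"
    and gamma_pos: "\<gamma> > 0"
    and delta_nonneg: "\<delta> \<ge> 0"
    and steady: "\<And>i. sbcm_f E Z \<gamma> \<delta> i x = 0"
    and node: "i \<notin> Z"
    and cond: "\<And>j. E i j \<Longrightarrow>
       (1 - sbcm_w E \<gamma> \<delta> (x i) (x j) i j) * (x j - x i)^2 > 1 / (2 * \<gamma>)"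
  shows "(\<exists>lam > 0. is_eigenvalue_sub (sbcm_jacobian E Z \<gamma> \<delta> x) (UNIV - Z) lam)
       \<and> (\<exists>lam > 0. is_eigenvalue_sub (sbcm_jacobian E Z \<gamma> \<delta> x) UNIV lam)"
proof -
  define \<phi> where "\<phi> k l = sbcm_w E \<gamma> \<delta> (x k) (x l) k l" for k l
  define W where "W k = (\<Sum>l\<in>UNIV. \<phi> k l)" for k
  define a where "a k l = \<phi> k l * (1 - 2*\<gamma>*(1 - \<phi> k l)*(x l - x k)^2)" for k l
  define J where "J = sbcm_jacobian E Z \<gamma> \<delta> x"
  define M where "M k l = (\<Sum>m\<in>UNIV. a k m * ((if m = l then 1 else 0) - (if k = l then 1 else 0)))" for k l
  define P where "P = UNIV - Z"
  have \<phi>sym: "\<phi> k l = \<phi> l k" for k l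
    unfolding \<phi>_def sbcm_w_def using sym by (auto simp: power2_commute)
  have \<phi>nn: "\<phi> k l \<ge> 0" for k l
    unfolding \<phi>_def sbcm_w_def by (simp add: add_pos_pos less_imp_le)
  have \<phi>pos: "\<phi> k l > 0" if "E k l" for k l
    using that unfolding \<phi>_def sbcm_w_def by (simp add: add_pos_pos)
  have \<phi>0: "\<phi> k l = 0" if "\<not> E k l" for k l
    using that unfolding \<phi>_def sbcm_w_def by simp
  have Wpos: "W k > 0" if kZ: "k \<notin> Z" for k
  proof -
    obtain j where "E k j" using nbr[OF kZ] by blast
    then show ?thesis unfolding W_def by (intro sum_pos2[of UNIV j]) (auto intro: \<phi>pos \<phi>nn)
  qed
  have N0: "(\<Sum>l\<in>UNIV. \<phi> k l * (x l - x k)) = 0" if "k \<notin> Z" for k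
    using steady[of k] that Wpos[OF that] unfolding sbcm_f_def W_def \<phi>_def by simp
  have Jform: "J k l = M k l / W k" if "k \<notin> Z" for k l
    unfolding J_def M_def W_def a_def \<phi>_def
    by (rule jac_formula[OF that]) (use Wpos[OF that] N0[OF that] in \<open>auto simp: W_def \<phi>_def\<close>)
  have Jz: "J k l = 0" if "k \<in> Z" for k l
    unfolding J_def using that by (rule jac_zealot)
  have asym: "a k l = a l k" for k l
    unfolding a_def using \<phi>sym by (simp add: power2_commute)
  have Malt: "M k l = a k l - (if k = l then (\<Sum>m\<in>UNIV. a k m) else 0)" for k l
  proof -
    have "M k l = (\<Sum>m\<in>UNIV. a k m * (if m = l then 1 else 0)) - (\<Sum>m\<in>UNIV. a k m * (if k = l then 1 else 0))"
      unfolding M_def by (simp add: right_diff_distrib sum_subtractf)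
    then show ?thesis by (simp add: delta_sum)
  qed
  have Msym: "M k l = M l k" for k l
    unfolding Malt using asym by auto
  define S where "S k l = M k l / (sqrt (W k) * sqrt (W l))" for k l
  have Ssym: "S k l = S l k" for k l
    unfolding S_def using Msym by (simp add: mult.commute)
  have aneg: "a i m \<le> 0" for m
  proof (cases "E i m")
    case True
    have c: "(1 - \<phi> i m) * (x m - x i)^2 > 1 / (2*\<gamma>)" using cond[OF True] unfolding \<phi>_def .
    then have "2*\<gamma> * ((1 - \<phi> i m) * (x m - x i)^2) > 1" using gamma_pos by (simp add: field_simps)
    then have "1 - 2*\<gamma>*(1 - \<phi> i m)*(x m - x i)^2 < 0" by (simp add: algebra_simps)
    then show ?thesis unfolding a_def using \<phi>pos[OF True] by (simp add: mult_pos_neg less_imp_le)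
  next
    case False
    then show ?thesis unfolding a_def by (simp add: \<phi>0)
  qed
  have asum: "(\<Sum>m\<in>UNIV. a i m) < 0"
  proof -
    obtain j where Ej: "E i j" using nbr[OF node] by blast
    have c: "(1 - \<phi> i j) * (x j - x i)^2 > 1 / (2*\<gamma>)" using cond[OF Ej] unfolding \<phi>_def .
    then have "2*\<gamma> * ((1 - \<phi> i j) * (x j - x i)^2) > 1" using gamma_pos by (simp add: field_simps)
    then have "1 - 2*\<gamma>*(1 - \<phi> i j)*(x j - x i)^2 < 0" by (simp add: algebra_simps)
    then have "a i j < 0" unfolding a_def using \<phi>pos[OF Ej] by (simp add: mult_pos_neg)
    then have "0 < (\<Sum>m\<in>UNIV. - a i m)" using aneg by (intro sum_pos2[of UNIV j]) auto
    then show ?thesis by (simp add: sum_negf)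
  qed
  have aii: "a i i = 0" unfolding a_def using \<phi>0[OF irrefl[of i]] by simp
  have "M i i > 0" using Malt[of i i] aii asum by simp
  moreover have "sqrt (W i) * sqrt (W i) > 0" using Wpos[OF node] by simp
  ultimately have Spos: "S i i > 0" unfolding S_def by simp
  obtain \<mu> u where mu: "\<mu> > 0" and u0: "\<And>k. k \<notin> P \<Longrightarrow> u k = 0" and unz: "\<exists>k\<in>P. u k \<noteq> 0"
    and ueig: "\<And>k. k \<in> P \<Longrightarrow> (\<Sum>l\<in>UNIV. S k l * u l) = \<mu> * u k"
    using sym_eig[of S i P, OF Ssym _ Spos] node unfolding P_def by blast
  define v where "v l = u l / sqrt (W l)" for l
  have v0: "v k = 0" if "k \<notin> P" for k using u0[OF that] unfolding v_def by simp
  have vnz: "\<exists>k\<in>P. v k \<noteq> 0"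
  proof -
    obtain k where "k \<in> P" "u k \<noteq> 0" using unz by blast
    moreover then have "sqrt (W k) > 0" using Wpos unfolding P_def by simp
    ultimately show ?thesis unfolding v_def by auto
  qed
  have eigP: "(\<Sum>l\<in>P. J k l * v l) = \<mu> * v k" if kP: "k \<in> P" for k
  proof -
    have kZ: "k \<notin> Z" using kP unfolding P_def by simp
    have sW: "sqrt (W k) > 0" using Wpos[OF kZ] by simp
    have "(\<Sum>l\<in>P. J k l * v l) = (\<Sum>l\<in>P. S k l * u l / sqrt (W k))"
    proof (rule sum.cong[OF refl])
      fix l assume "l \<in> P"
      have "J k l * v l = M k l / W k * (u l / sqrt (W l))" using Jform[OF kZ] unfolding v_def by simp
      also have "\<dots> = S k l * u l / sqrt (W k)"
        unfolding S_def using sW Wpos[OF kZ]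
        by (simp add: field_simps)
      finally show "J k l * v l = S k l * u l / sqrt (W k)" .
    qed
    also have "\<dots> = (\<Sum>l\<in>UNIV. S k l * u l) / sqrt (W k)"
    proof -
      have "(\<Sum>l\<in>UNIV. S k l * u l) = (\<Sum>l\<in>P. S k l * u l)"
        by (rule sum.mono_neutral_right) (auto simp: u0)
      then show ?thesis by (simp add: sum_divide_distrib)
    qed
    also have "\<dots> = \<mu> * v k" using ueig[OF kP] unfolding v_def by simp
    finally show ?thesis .
  qed
  have part1: "is_eigenvalue_sub J P \<mu>"
    unfolding is_eigenvalue_sub_def
  proof (intro exI[of _ v] conjI allI impI ballI)
    show "\<And>k. k \<notin> P \<Longrightarrow> v k = 0" by (rule v0)
    show "\<exists>k\<in>P. v k \<noteq> 0" by (rule vnz)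
    show "\<And>k. k \<in> P \<Longrightarrow> (\<Sum>l\<in>P. J k l * v l) = \<mu> * v k" by (rule eigP)
  qed
  have eigU: "(\<Sum>l\<in>UNIV. J k l * v l) = \<mu> * v k" for k
  proof (cases "k \<in> Z")
    case True
    then show ?thesis using Jz[OF True] v0[of k] unfolding P_def by simp
  next
    case False
    then have kP: "k \<in> P" unfolding P_def by simp
    have "(\<Sum>l\<in>UNIV. J k l * v l) = (\<Sum>l\<in>P. J k l * v l)"
      by (rule sum.mono_neutral_right) (auto simp: v0)
    then show ?thesis using eigP[OF kP] by simp
  qed
  have part2: "is_eigenvalue_sub J UNIV \<mu>"
    unfolding is_eigenvalue_sub_def
  proof (intro exI[of _ v] conjI allI impI ballI)
    show "\<And>k. k \<notin> UNIV \<Longrightarrow> v k = 0" by simp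
    show "\<exists>k\<in>UNIV. v k \<noteq> 0" using vnz by blast
    show "\<And>k. k \<in> UNIV \<Longrightarrow> (\<Sum>l\<in>UNIV. J k l * v l) = \<mu> * v k" by (rule eigU)
  qed
  have r1: "is_eigenvalue_sub (sbcm_jacobian E Z \<gamma> \<delta> x) (UNIV - Z) \<mu>" using part1 unfolding J_def P_def .
  have r2: "is_eigenvalue_sub (sbcm_jacobian E Z \<gamma> \<delta> x) UNIV \<mu>" using part2 unfolding J_def .
  show ?thesis using r1 r2 mu by blast
qed

end
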